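(* For every SaSTL formula $\varphi$ (as defined in the context), every spatio-temporal signal $\omega$, every time $t\in\mathbb{T}$ and every location $l\in L$: \[ \rho(\varphi,\omega,t,l)>0 \;\Longrightarrow\; (\omega,t,l)\models\varphi, \qquad \rho(\varphi,\omega,t,l)<0 \;\Longrightarrow\; (\omega,t,l)\not\models\varphi . \]
   Context: Time domain $\mathbb{T}=\mathbb{R}_{\ge 0}$. $L$ is a finite nonempty set of locations. $G=(L,E,\eta)$ is a weighted undirected graph with edge weights $\eta:E\to\mathbb{R}_{\ge0}$; the distance $d(l,l')$ is the minimum, over all paths $\sigma$ between $l$ and $l'$, of $\sum_{e\in\sigma}\eta(e)$ (and $+\infty$ if there is no path). $X=\{x_1,\dots,x_n\}$ is a set of signal variables. A spatio-temporal signal is a function $\omega:\mathbb{T}\times L\to\mathbb{R}^n$; $\pi_{x}(\omega)[t,l]\in\mathbb{R}$ denotes its component for variable $x\in X$ at time $t$ and location $l$. $P$ is a finite set of propositions and $\mathcal{L}:L\to 2^P$ a labeling. Location formulas are $\psi::=\top\mid p\mid\neg\psi\mid\psi\vee\psi$ ($p\in P$), with $\mathcal{L}(l)\models\psi$ defined in the usual propositional way. A spatial domain is $\mathcal{D}=([d_1,d_2],\psi)$ with $0\le d_1\le d_2\le+\infty$. For $l\in L$ let $L^l_{\mathcal{D}}=\{l'\in L: d_1\le d(l,l')\le d_2,\ \mathcal{L}(l')\models\psi\}$. Standing assumption: for every spatial domain $\mathcal{D}$ occurring in the formula and every $l\in L$, $L^l_{\mathcal{D}}\neq\emptyset$. Let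 $\alpha^x_{\mathcal{D}}(\omega,t,l)$ be the (nonempty, finite) multiset $\{\pi_x(\omega)[t,l'] : l'\in L^l_{\mathcal{D}}\}$, and for $\mathrm{op}\in\{\max,\min,\mathrm{sum},\mathrm{avg}\}$ let $\mathrm{op}(\cdot)$ be its maximum, minimum, sum, or arithmetic mean. SaSTL syntax: $\varphi::= x>c \mid \neg\varphi\mid \varphi_1\wedge\varphi_2\mid\varphi_1\vee\varphi_2\mid \varphi_1\,\mathcal{U}_I\,\varphi_2\mid \mathcal{A}^{\mathrm{op}}_{\mathcal{D}}x>c\mid \mathcal{C}^{\mathrm{op}}_{\mathcal{D}}\varphi>c$, where $x\in X$, $c\in\mathbb{R}$, $I\subseteq\mathbb{R}_{>0}$ is a nonempty interval, $\mathrm{op}\in\{\max,\min,\mathrm{sum},\mathrm{avg}\}$. For counting formulas $\mathcal{C}^{\mathrm{op}}_{\mathcal{D}}\varphi>c$ it is assumed that $0\le c<1$ if $\mathrm{op}\in\{\max,\min,\mathrm{avg}\}$ and $0\le c<|L^l_{\mathcal{D}}|$ for all $l\in L$ if $\mathrm{op}=\mathrm{sum}$. Boolean semantics: $(\omega,t,l)\models x>c$ iff $\pi_x(\omega)[t,l]>c$; $\neg,\wedge,\vee$ as usual; $(\omega,t,l)\models\varphi_1\mathcal{U}_I\varphi_2$ iff there is $t'\in(t+I)\cap\mathbb{T}$ with $(\omega,t',l)\models\varphi_2$ and $(\omega,t'',l)\models\varphi_1$ for all $t''\in(t,t')$ (open interval); $(\omega,t,l)\models\mathcal{A}^{\mathrm{op}}_{\mathcal{D}}x>c$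 iff $\mathrm{op}(\alpha^x_{\mathcal{D}}(\omega,t,l))>c$; $(\omega,t,l)\models\mathcal{C}^{\mathrm{op}}_{\mathcal{D}}\varphi>c$ iff $\mathrm{op}(\{g(l'):l'\in L^l_{\mathcal{D}}\})>c$ (multiset), where $g(l')=1$ if $(\omega,t,l')\models\varphi$ and $g(l')=0$ otherwise. Quantitative semantics (robustness, values in $\mathbb{R}\cup\{\pm\infty\}$, with $\inf\emptyset=+\infty$): $\rho(x>c,\omega,t,l)=\pi_x(\omega)[t,l]-c$; $\rho(\neg\varphi)=-\rho(\varphi)$; $\rho(\varphi_1\wedge\varphi_2)=\min\{\rho(\varphi_1),\rho(\varphi_2)\}$; $\rho(\varphi_1\vee\varphi_2)=\max\{\rho(\varphi_1),\rho(\varphi_2)\}$ (all at the same $\omega,t,l$); $\rho(\varphi_1\mathcal{U}_I\varphi_2,\omega,t,l)=\sup_{t'\in(t+I)\cap\mathbb{T}}\min\{\rho(\varphi_2,\omega,t',l),\ \inf_{t''\in(t,t')}\rho(\varphi_1,\omega,t'',l)\}$; $\rho(\mathcal{A}^{\mathrm{sum}}_{\mathcal{D}}x>c,\omega,t,l)=\big(\mathrm{sum}(\alpha^x_{\mathcal{D}}(\omega,t,l))-c\big)/|\alpha^x_{\mathcal{D}}(\omega,t,l)|$ and $\rho(\mathcal{A}^{\mathrm{op}}_{\mathcal{D}}x>c,\omega,t,l)=\mathrm{op}(\alpha^x_{\mathcal{D}}(\omega,t,l))-c$ for $\mathrm{op}\in\{\max,\min,\mathrm{avg}\}$. For counting,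 let $R=\{\rho(\varphi,\omega,t,l'):l'\in L^l_{\mathcal{D}}\}$ (multiset) and let $\delta(k,R)$ denote the $k$-th largest element of $R$ counted with multiplicity; then $\rho(\mathcal{C}^{\max}_{\mathcal{D}}\varphi>c)=\max R$, $\rho(\mathcal{C}^{\min}_{\mathcal{D}}\varphi>c)=\min R$, $\rho(\mathcal{C}^{\mathrm{sum}}_{\mathcal{D}}\varphi>c)=\delta(\lfloor c\rfloor+1,R)$, $\rho(\mathcal{C}^{\mathrm{avg}}_{\mathcal{D}}\varphi>c)=\delta(\lfloor c\,|L^l_{\mathcal{D}}|\rfloor+1,R)$. *)

theory Defs
  imports "HOL-Analysis.Analysis" "HOL-Library.Multiset"
begin

text \<open>An undirected graph is a set
  E of edges, each edge being an unordered pair {a,b} of locations, with weights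
  eta :: 'l set => real.\<close>

definition is_path :: "'l set set \<Rightarrow> 'l \<Rightarrow> 'l \<Rightarrow> 'l list \<Rightarrow> bool" where
  "is_path E a b p \<longleftrightarrow> p \<noteq> [] \<and> hd p = a \<and> last p = b \<and> distinct p \<and>
     (\<forall>(u, v) \<in> set (zip p (tl p)). {u, v} \<in> E)"

definition path_weight :: "('l set \<Rightarrow> real) \<Rightarrow> 'l list \<Rightarrow> real" where
  "path_weight eta p = (\<Sum>(u, v) \<leftarrow> zip p (tl p). eta {u, v})"

text \<open>Distance: minimum path weight, +infinity if there is no path (INF of empty set).\<close>
definition gdist :: "'l set set \<Rightarrow> ('l set \<Rightarrow> real) \<Rightarrow> 'l \<Rightarrow> 'l \<Rightarrow> ereal" where
  "gdist E eta a b = (INF p \<in> {p. is_path E a b p}. ereal (path_weight eta p))"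

datatype 'p lform = LTop | LProp 'p | LNot "'p lform" | LOr "'p lform" "'p lform"

fun lsat :: "'p set \<Rightarrow> 'p lform \<Rightarrow> bool" where
  "lsat P LTop = True"
| "lsat P (LProp p) = (p \<in> P)"
| "lsat P (LNot psi) = (\<not> lsat P psi)"
| "lsat P (LOr psi1 psi2) = (lsat P psi1 \<or> lsat P psi2)"

text \<open>A spatial domain ([d1,d2], psi), with d1, d2 in [0, +infinity].\<close>
type_synonym 'p sdom = "ereal \<times> ereal \<times> 'p lform"

definition nbhd :: "'l set \<Rightarrow> 'l set set \<Rightarrow> ('l set \<Rightarrow> real) \<Rightarrow> ('l \<Rightarrow> 'p set)
    \<Rightarrow> 'p sdom \<Rightarrow> 'l \<Rightarrow> 'l set" where
  "nbhd L E eta Lab D l = (case D of (d1, d2, psi) \<Rightarrow>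
     {l' \<in> L. d1 \<le> gdist E eta l l' \<and> gdist E eta l l' \<le> d2 \<and> lsat (Lab l') psi})"

datatype aop = OpMax | OpMin | OpSum | OpAvg

text \<open>Until I phi1 phi2 stands for phi1 U_I phi2; Agg op D x c for A^op_D x > c;
  Count op D phi c for C^op_D phi > c.  Intervals are sets of reals.\<close>
datatype ('x, 'p) sastl =
    Gt 'x real
  | Neg "('x, 'p) sastl"
  | And "('x, 'p) sastl" "('x, 'p) sastl"
  | Or "('x, 'p) sastl" "('x, 'p) sastl"
  | Until "real set" "('x, 'p) sastl" "('x, 'p) sastl"
  | Agg aop "'p sdom" 'x real
  | Count aop "'p sdom" "('x, 'p) sastl" real

fun mop :: "aop \<Rightarrow> real multiset \<Rightarrow> real" where
  "mop OpMax M = Max (set_mset M)"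
| "mop OpMin M = Min (set_mset M)"
| "mop OpSum M = sum_mset M"
| "mop OpAvg M = sum_mset M / real (size M)"

fun wf :: "'l set \<Rightarrow> 'l set set \<Rightarrow> ('l set \<Rightarrow> real) \<Rightarrow> ('l \<Rightarrow> 'p set)
    \<Rightarrow> ('x, 'p) sastl \<Rightarrow> bool" where
  "wf L E eta Lab (Gt x c) = True"
| "wf L E eta Lab (Neg phi) = wf L E eta Lab phi"
| "wf L E eta Lab (And phi1 phi2) = (wf L E eta Lab phi1 \<and> wf L E eta Lab phi2)"
| "wf L E eta Lab (Or phi1 phi2) = (wf L E eta Lab phi1 \<and> wf L E eta Lab phi2)"
| "wf L E eta Lab (Until I phi1 phi2) =
     (I \<noteq> {} \<and> I \<subseteq> {0<..} \<and> is_interval I \<and> wf L E eta Lab phi1 \<and> wf L E eta Lab phi2)"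
| "wf L E eta Lab (Agg op D x c) =
     (0 \<le> fst D \<and> fst D \<le> fst (snd D) \<and> (\<forall>l\<in>L. nbhd L E eta Lab D l \<noteq> {}))"
| "wf L E eta Lab (Count op D phi c) =
     (0 \<le> fst D \<and> fst D \<le> fst (snd D) \<and> (\<forall>l\<in>L. nbhd L E eta Lab D l \<noteq> {}) \<and>
      (if op = OpSum then 0 \<le> c \<and> (\<forall>l\<in>L. c < real (card (nbhd L E eta Lab D l)))
       else 0 \<le> c \<and> c < 1) \<and>
      wf L E eta Lab phi)"

text \<open>A signal is omega :: real => 'l => 'x => real; omega t l x is pi_x(omega)[t,l].\<close>

definition alpha :: "'l set \<Rightarrow> 'l set set \<Rightarrow> ('l set \<Rightarrow> real) \<Rightarrow> ('l \<Rightarrow> 'p set)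
    \<Rightarrow> 'p sdom \<Rightarrow> 'x \<Rightarrow> (real \<Rightarrow> 'l \<Rightarrow> 'x \<Rightarrow> real) \<Rightarrow> real \<Rightarrow> 'l \<Rightarrow> real multiset" where
  "alpha L E eta Lab D x \<omega> t l = image_mset (\<lambda>l'. \<omega> t l' x) (mset_set (nbhd L E eta Lab D l))"

fun sat :: "'l set \<Rightarrow> 'l set set \<Rightarrow> ('l set \<Rightarrow> real) \<Rightarrow> ('l \<Rightarrow> 'p set)
    \<Rightarrow> ('x, 'p) sastl \<Rightarrow> (real \<Rightarrow> 'l \<Rightarrow> 'x \<Rightarrow> real) \<Rightarrow> real \<Rightarrow> 'l \<Rightarrow> bool" where
  "sat L E eta Lab (Gt x c) \<omega> t l = (\<omega> t l x > c)"
| "sat L E eta Lab (Neg phi) \<omega> t l = (\<not> sat L E eta Lab phi \<omega> t l)"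
| "sat L E eta Lab (And phi1 phi2) \<omega> t l =
     (sat L E eta Lab phi1 \<omega> t l \<and> sat L E eta Lab phi2 \<omega> t l)"
| "sat L E eta Lab (Or phi1 phi2) \<omega> t l =
     (sat L E eta Lab phi1 \<omega> t l \<or> sat L E eta Lab phi2 \<omega> t l)"
| "sat L E eta Lab (Until I phi1 phi2) \<omega> t l =
     (\<exists>t' \<in> ((\<lambda>i. t + i) ` I) \<inter> {0..}. sat L E eta Lab phi2 \<omega> t' l \<and>
        (\<forall>t'' \<in> {t<..<t'}. sat L E eta Lab phi1 \<omega> t'' l))"
| "sat L E eta Lab (Agg op D x c) \<omega> t l = (mop op (alpha L E eta Lab D x \<omega> t l) > c)"
| "sat L E eta Lab (Count op D phi c) \<omega> t l =
     (mop op (image_mset (\<lambda>l'. if sat L E eta Lab phi \<omega> t l' then 1 else 0)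
                (mset_set (nbhd L E eta Lab D l))) > c)"

text \<open>delta k R: the k-th largest element (k >= 1) of R counted with multiplicity.\<close>
definition kth_largest :: "nat \<Rightarrow> ereal multiset \<Rightarrow> ereal" where
  "kth_largest k R = rev (sorted_list_of_multiset R) ! (k - 1)"

fun rho :: "'l set \<Rightarrow> 'l set set \<Rightarrow> ('l set \<Rightarrow> real) \<Rightarrow> ('l \<Rightarrow> 'p set)
    \<Rightarrow> ('x, 'p) sastl \<Rightarrow> (real \<Rightarrow> 'l \<Rightarrow> 'x \<Rightarrow> real) \<Rightarrow> real \<Rightarrow> 'l \<Rightarrow> ereal" where
  "rho L E eta Lab (Gt x c) \<omega> t l = ereal (\<omega> t l x - c)"
| "rho L E eta Lab (Neg phi) \<omega> t l = - rho L E eta Lab phi \<omega> t l"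
| "rho L E eta Lab (And phi1 phi2) \<omega> t l =
     min (rho L E eta Lab phi1 \<omega> t l) (rho L E eta Lab phi2 \<omega> t l)"
| "rho L E eta Lab (Or phi1 phi2) \<omega> t l =
     max (rho L E eta Lab phi1 \<omega> t l) (rho L E eta Lab phi2 \<omega> t l)"
| "rho L E eta Lab (Until I phi1 phi2) \<omega> t l =
     (SUP t' \<in> ((\<lambda>i. t + i) ` I) \<inter> {0..}. min (rho L E eta Lab phi2 \<omega> t' l)
        (INF t'' \<in> {t<..<t'}. rho L E eta Lab phi1 \<omega> t'' l))"
| "rho L E eta Lab (Agg op D x c) \<omega> t l =
     (if op = OpSum then ereal ((sum_mset (alpha L E eta Lab D x \<omega> t l) - c)
                                / real (size (alpha L E eta Lab D x \<omega> t l)))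
      else ereal (mop op (alpha L E eta Lab D x \<omega> t l) - c))"
| "rho L E eta Lab (Count op D phi c) \<omega> t l =
     (let R = image_mset (\<lambda>l'. rho L E eta Lab phi \<omega> t l') (mset_set (nbhd L E eta Lab D l))
      in (case op of
            OpMax \<Rightarrow> Max (set_mset R)
          | OpMin \<Rightarrow> Min (set_mset R)
          | OpSum \<Rightarrow> kth_largest (nat \<lfloor>c\<rfloor> + 1) R
          | OpAvg \<Rightarrow> kth_largest (nat \<lfloor>c * real (card (nbhd L E eta Lab D l))\<rfloor> + 1) R))"

end

theory Submission imports Defs begin

lemma card_filter_img:
  assumes "finite N"
  shows "size (filter_mset P (image_mset f (mset_set N))) = card {x\<in>N. P (f x)}"
proof -
  have "filter_mset P (image_mset f (mset_set N)) = image_mset f (filter_mset (\<lambda>x. P (f x)) (mset_set N))"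
    by (induction N rule: infinite_finite_induct) auto
  thus ?thesis using assms by (simp add: filter_mset_mset_set)
qed

lemma len_filter_take:
  assumes "\<forall>i<k. P (xs ! i)" "k \<le> length xs"
  shows "k \<le> length (filter P xs)"
proof -
  have "filter P (take k xs) = take k xs"
    using assms by (auto simp: filter_id_conv in_set_conv_nth)
  hence "length (filter P (take k xs)) = k" using assms by simp
  moreover have "length (filter P xs) = length (filter P (take k xs)) + length (filter P (drop k xs))"
    by (metis append_take_drop_id filter_append length_append)
  ultimately show ?thesis by simp
qed

lemma len_filter_drop:
  assumes "\<forall>i. k \<le> i \<and> i < length xs \<longrightarrow> P (xs ! i)"
  shows "length xs - k \<le> length (filter P xs)"
proof -
  have "filter P (drop k xs) = drop k xs"
    using assms by (auto simp: filter_id_conv in_set_conv_nth)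
  hence "length (filter P (drop k xs)) = length xs - k" by simp
  moreover have "length (filter P xs) = length (filter P (take k xs)) + length (filter P (drop k xs))"
    by (metis append_take_drop_id filter_append length_append)
  ultimately show ?thesis by simp
qed

lemma kth_props:
  fixes f :: "'a \<Rightarrow> ereal"
  assumes "finite N" "1 \<le> k" "k \<le> card N"
  shows "k \<le> card {x\<in>N. kth_largest k (image_mset f (mset_set N)) \<le> f x}"
    and "card N - k + 1 \<le> card {x\<in>N. f x \<le> kth_largest k (image_mset f (mset_set N))}"
proof -
  define R where "R = image_mset f (mset_set N)"
  define xs where "xs = rev (sorted_list_of_multiset R)"
  have len: "length xs = card N" unfolding xs_def R_def
    by (metis length_rev mset_sorted_list_of_multiset size_image_mset size_mset size_mset_set)
  have ms: "mset xs = R" unfolding xs_def by simp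
  have sr: "sorted (rev xs)" unfolding xs_def by simp
  have v: "kth_largest k R = xs ! (k - 1)" unfolding kth_largest_def xs_def by simp
  have cnt: "card {x\<in>N. P (f x)} = length (filter P xs)" for P
    using card_filter_img[OF assms(1), of P f] ms unfolding R_def
    by (metis mset_filter size_mset)
  have "k \<le> length (filter (\<lambda>y. xs ! (k - 1) \<le> y) xs)"
    apply (rule len_filter_take)
    using sr len assms by (auto intro: sorted_rev_nth_mono)
  thus "k \<le> card {x\<in>N. kth_largest k (image_mset f (mset_set N)) \<le> f x}"
    using cnt v R_def by simp
  have "length xs - (k - 1) \<le> length (filter (\<lambda>y. y \<le> xs ! (k - 1)) xs)"
    apply (rule len_filter_drop)
    using sr len assms by (auto intro: sorted_rev_nth_mono)
  moreover have "card {x\<in>N. f x \<le> xs!(k-1)} = length (filter (\<lambda>y. y \<le> xs!(k-1)) xs)"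
    using cnt[of "\<lambda>y. y \<le> xs!(k-1)"] by simp
  ultimately show "card N - k + 1 \<le> card {x\<in>N. f x \<le> kth_largest k (image_mset f (mset_set N))}"
    using v R_def len assms by simp
qed

lemma sum_ind: "finite N \<Longrightarrow> sum_mset (image_mset (\<lambda>l'. if P l' then 1 else 0) (mset_set N)) = real (card {x\<in>N. P x})"
proof -
  assume N: "finite N"
  have "sum_mset (image_mset (\<lambda>l'. if P l' then 1 else 0) (mset_set N)) = (\<Sum>l'\<in>N. if P l' then 1 else (0::real))"
    by (simp add: sum_unfold_sum_mset)
  also have "\<dots> = real (card {x\<in>N. P x})"
    using N by (simp add: sum.If_cases Int_def)
  finally show ?thesis .
qed


lemma count_aux:
  fixes f :: "'a \<Rightarrow> ereal"
  assumes N: "finite N" and pos: "\<forall>x\<in>N. f x > 0 \<longrightarrow> S x"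
    and neg: "\<forall>x\<in>N. f x < 0 \<longrightarrow> \<not> S x" and k: "1 \<le> k" "k \<le> card N"
  shows "kth_largest k (image_mset f (mset_set N)) > 0 \<Longrightarrow> k \<le> card {x\<in>N. S x}"
    and "kth_largest k (image_mset f (mset_set N)) < 0 \<Longrightarrow> card {x\<in>N. S x} \<le> k - 1"
proof -
  let ?v = "kth_largest k (image_mset f (mset_set N))"
  assume v: "?v > 0"
  have "{x\<in>N. ?v \<le> f x} \<subseteq> {x\<in>N. S x}" using v pos by fastforce
  hence "card {x\<in>N. ?v \<le> f x} \<le> card {x\<in>N. S x}" using N by (intro card_mono) auto
  thus "k \<le> card {x\<in>N. S x}" using kth_props(1)[OF N k, of f] by linarith
next
  let ?v = "kth_largest k (image_mset f (mset_set N))"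
  assume v: "?v < 0"
  have disj: "{x\<in>N. S x} \<inter> {x\<in>N. f x \<le> ?v} = {}" using v neg by fastforce
  have "card ({x\<in>N. S x} \<union> {x\<in>N. f x \<le> ?v}) = card {x\<in>N. S x} + card {x\<in>N. f x \<le> ?v}"
    using N disj by (intro card_Un_disjoint) auto
  moreover have "card ({x\<in>N. S x} \<union> {x\<in>N. f x \<le> ?v}) \<le> card N"
    using N by (intro card_mono) auto
  ultimately show "card {x\<in>N. S x} \<le> k - 1" using kth_props(2)[OF N k, of f] k by linarith
qed


lemma main:
  fixes L :: "'l set" and phi :: "('x, 'p) sastl"
  assumes fin: "finite L"
  shows "wf L E eta Lab phi \<Longrightarrow> 0 \<le> t \<Longrightarrow> l \<in> L \<Longrightarrow>
    (rho L E eta Lab phi \<omega> t l > 0 \<longrightarrow> sat L E eta Lab phi \<omega> t l) \<and>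
    (rho L E eta Lab phi \<omega> t l < 0 \<longrightarrow> \<not> sat L E eta Lab phi \<omega> t l)"
proof (induction phi arbitrary: t l)
  case (Gt x c)
  then show ?case by simp
next
  case (Neg phi)
  then show ?case by (auto simp: ereal_uminus_less_reorder ereal_less_uminus_reorder)
next
  case (And phi1 phi2)
  then show ?case by (auto simp: min_less_iff_disj)
next
  case (Or phi1 phi2)
  then show ?case by (auto simp: less_max_iff_disj)
next
  case (Until I phi1 phi2)
  let ?S = "((\<lambda>i. t + i) ` I) \<inter> {0..}"
  let ?F = "\<lambda>t'. min (rho L E eta Lab phi2 \<omega> t' l) (INF t'' \<in> {t<..<t'}. rho L E eta Lab phi1 \<omega> t'' l)"
  have wf1: "wf L E eta Lab phi1" and wf2: "wf L E eta Lab phi2" using Until.prems by auto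
  have r: "rho L E eta Lab (Until I phi1 phi2) \<omega> t l = (SUP t' \<in> ?S. ?F t')" by simp
  show ?case
  proof (intro conjI impI)
    assume "0 < rho L E eta Lab (Until I phi1 phi2) \<omega> t l"
    then obtain t' where t': "t' \<in> ?S" "0 < ?F t'" unfolding r by (auto simp: less_SUP_iff)
    have "0 < rho L E eta Lab phi2 \<omega> t' l" using t' by simp
    hence s2: "sat L E eta Lab phi2 \<omega> t' l" using Until.IH(2)[OF wf2 _ Until.prems(3)] t' by auto
    have s1: "sat L E eta Lab phi1 \<omega> t'' l" if "t'' \<in> {t<..<t'}" for t''
    proof -
      have "0 < (INF t'' \<in> {t<..<t'}. rho L E eta Lab phi1 \<omega> t'' l)" using t' by simp
      also have "\<dots> \<le> rho L E eta Lab phi1 \<omega> t'' l" using that by (rule INF_lower)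
      finally show ?thesis using Until.IH(1)[OF wf1 _ Until.prems(3)] that Until.prems(2) by auto
    qed
    show "sat L E eta Lab (Until I phi1 phi2) \<omega> t l" using t' s1 s2 by auto
  next
    assume neg: "rho L E eta Lab (Until I phi1 phi2) \<omega> t l < 0"
    show "\<not> sat L E eta Lab (Until I phi1 phi2) \<omega> t l"
    proof
      assume "sat L E eta Lab (Until I phi1 phi2) \<omega> t l"
      then obtain t' where t': "t' \<in> ?S" and s2: "sat L E eta Lab phi2 \<omega> t' l"
        and s1: "\<forall>t'' \<in> {t<..<t'}. sat L E eta Lab phi1 \<omega> t'' l" by auto
      have "?F t' < 0" using neg t' unfolding r by (auto dest: SUP_lessD)
      hence "rho L E eta Lab phi2 \<omega> t' l < 0 \<or> (INF t'' \<in> {t<..<t'}. rho L E eta Lab phi1 \<omega> t'' l) < 0"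
        by (auto simp: min_less_iff_disj)
      thus False
      proof
        assume "rho L E eta Lab phi2 \<omega> t' l < 0"
        thus False using Until.IH(2)[OF wf2 _ Until.prems(3)] t' s2 by auto
      next
        assume "(INF t'' \<in> {t<..<t'}. rho L E eta Lab phi1 \<omega> t'' l) < 0"
        then obtain t'' where tt: "t'' \<in> {t<..<t'}" "rho L E eta Lab phi1 \<omega> t'' l < 0"
          by (auto simp: INF_less_iff)
        have "0 \<le> t''" using tt Until.prems(2) by auto
        thus False using Until.IH(1)[OF wf1 \<open>0 \<le> t''\<close> Until.prems(3)] s1 tt by auto
      qed
    qed
  qed
next
  case (Agg op D x c)
  let ?N = "nbhd L E eta Lab D l"
  have Nsub: "?N \<subseteq> L" unfolding nbhd_def by (auto split: prod.splits)
  have Nfin: "finite ?N" using Nsub fin by (rule finite_subset)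
  have Nne: "?N \<noteq> {}" using Agg.prems by auto
  have sz: "size (alpha L E eta Lab D x \<omega> t l) > 0"
    using Nfin Nne by (simp add: alpha_def card_gt_0_iff)
  show ?case
  proof (cases "op = OpSum")
    case True
    then show ?thesis using sz by (auto simp: divide_pos_pos divide_neg_pos zero_less_divide_iff divide_less_0_iff)
  next
    case False
    then show ?thesis by auto
  qed
next
  case (Count op D phi c)
  let ?N = "nbhd L E eta Lab D l"
  have Nsub: "?N \<subseteq> L" unfolding nbhd_def by (auto split: prod.splits)
  have Nfin: "finite ?N" using Nsub fin by (rule finite_subset)
  have Nne: "?N \<noteq> {}" using Count.prems by auto
  have wf0: "wf L E eta Lab phi" using Count.prems by auto
  define f where "f = (\<lambda>l'. rho L E eta Lab phi \<omega> t l')"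
  define S where "S = (\<lambda>l'. sat L E eta Lab phi \<omega> t l')"
  have pos: "\<forall>x\<in>?N. f x > 0 \<longrightarrow> S x" and neg: "\<forall>x\<in>?N. f x < 0 \<longrightarrow> \<not> S x"
    using Count.IH[OF wf0 Count.prems(2)] Nsub unfolding f_def S_def by auto
  have rho_eq: "rho L E eta Lab (Count op D phi c) \<omega> t l =
     (case op of OpMax \<Rightarrow> Max (f ` ?N) | OpMin \<Rightarrow> Min (f ` ?N)
       | OpSum \<Rightarrow> kth_largest (nat \<lfloor>c\<rfloor> + 1) (image_mset f (mset_set ?N))
       | OpAvg \<Rightarrow> kth_largest (nat \<lfloor>c * real (card ?N)\<rfloor> + 1) (image_mset f (mset_set ?N)))"
    using Nfin unfolding f_def by (simp add: Let_def split: aop.split)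
  let ?g = "\<lambda>l'. if S l' then 1 else (0::real)"
  have sat_eq: "sat L E eta Lab (Count op D phi c) \<omega> t l = (mop op (image_mset ?g (mset_set ?N)) > c)"
    unfolding S_def by simp
  have sumg: "sum_mset (image_mset ?g (mset_set ?N)) = real (card {x\<in>?N. S x})"
    using sum_ind[OF Nfin] by simp
  show ?case
  proof (cases op)
    case OpMax
    have c: "0 \<le> c" "c < 1" using Count.prems OpMax by auto
    show ?thesis
    proof (intro conjI impI)
      assume "0 < rho L E eta Lab (Count op D phi c) \<omega> t l"
      hence "0 < Max (f ` ?N)" using rho_eq OpMax by simp
      then obtain x where x: "x \<in> ?N" "f x = Max (f ` ?N)" proof -
        have "Max (f ` ?N) \<in> f ` ?N" using Nfin Nne by (intro Max_in) auto
        thus ?thesis using that by (metis imageE)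
      qed
      hence "S x" using pos \<open>0 < Max (f ` ?N)\<close> by auto
      hence "1 \<in> ?g ` ?N" using x by force
      hence "1 \<le> Max (?g ` ?N)" using Nfin by (intro Max_ge) auto
      thus "sat L E eta Lab (Count op D phi c) \<omega> t l" using sat_eq OpMax c Nfin by simp
    next
      assume "rho L E eta Lab (Count op D phi c) \<omega> t l < 0"
      hence m: "Max (f ` ?N) < 0" using rho_eq OpMax by simp
      have "\<forall>x\<in>?N. \<not> S x" using m neg Nfin by (meson Max_ge finite_imageI imageI le_less_trans)
      hence "?g ` ?N = {0}" using Nne by auto
      thus "\<not> sat L E eta Lab (Count op D phi c) \<omega> t l" using sat_eq OpMax c Nfin by simp
    qed
  next
    case OpMin
    have c: "0 \<le> c" "c < 1" using Count.prems OpMin by auto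
    show ?thesis
    proof (intro conjI impI)
      assume "0 < rho L E eta Lab (Count op D phi c) \<omega> t l"
      hence m: "0 < Min (f ` ?N)" using rho_eq OpMin by simp
      have "\<forall>x\<in>?N. S x" using m pos Nfin by (meson Min_le finite_imageI imageI less_le_trans)
      hence "?g ` ?N = {1}" using Nne by auto
      thus "sat L E eta Lab (Count op D phi c) \<omega> t l" using sat_eq OpMin c Nfin by simp
    next
      assume "rho L E eta Lab (Count op D phi c) \<omega> t l < 0"
      hence "Min (f ` ?N) < 0" using rho_eq OpMin by simp
      then obtain x where x: "x \<in> ?N" "f x = Min (f ` ?N)" proof -
        have "Min (f ` ?N) \<in> f ` ?N" using Nfin Nne by (intro Min_in) auto
        thus ?thesis using that by (metis imageE)
      qed
      hence "\<not> S x" using neg \<open>Min (f ` ?N) < 0\<close> by auto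
      hence "0 \<in> ?g ` ?N" using x by force
      hence "Min (?g ` ?N) \<le> 0" using Nfin by (intro Min_le) auto
      thus "\<not> sat L E eta Lab (Count op D phi c) \<omega> t l" using sat_eq OpMin c Nfin by simp
    qed
  next
    case OpSum
    have c: "0 \<le> c" "\<forall>l\<in>L. c < real (card (nbhd L E eta Lab D l))" using Count.prems OpSum by auto
    have cN: "c < real (card ?N)" using c Count.prems(3) by auto
    have fl: "real (nat \<lfloor>c\<rfloor>) = of_int \<lfloor>c\<rfloor>" using c by simp
    have k: "1 \<le> nat \<lfloor>c\<rfloor> + 1" "nat \<lfloor>c\<rfloor> + 1 \<le> card ?N"
      using cN c by (auto, linarith)
    show ?thesis
    proof (intro conjI impI)
      assume "0 < rho L E eta Lab (Count op D phi c) \<omega> t l"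
      hence "nat \<lfloor>c\<rfloor> + 1 \<le> card {x\<in>?N. S x}"
        using count_aux(1)[OF Nfin pos neg k] rho_eq OpSum by simp
      hence "real (nat \<lfloor>c\<rfloor> + 1) \<le> real (card {x\<in>?N. S x})" by linarith
      moreover have "c < real (nat \<lfloor>c\<rfloor> + 1)" using fl by linarith
      ultimately show "sat L E eta Lab (Count op D phi c) \<omega> t l" using sat_eq OpSum sumg by simp
    next
      assume "rho L E eta Lab (Count op D phi c) \<omega> t l < 0"
      hence "card {x\<in>?N. S x} \<le> nat \<lfloor>c\<rfloor>"
        using count_aux(2)[OF Nfin pos neg k] rho_eq OpSum by simp
      hence "real (card {x\<in>?N. S x}) \<le> real (nat \<lfloor>c\<rfloor>)" by linarith
      moreover have "real (nat \<lfloor>c\<rfloor>) \<le> c" using fl by linarith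
      ultimately show "\<not> sat L E eta Lab (Count op D phi c) \<omega> t l" using sat_eq OpSum sumg by simp
    qed
  next
    case OpAvg
    have c: "0 \<le> c" "c < 1" using Count.prems OpAvg by auto
    define n where "n = card ?N"
    have npos: "0 < n" using Nfin Nne unfolding n_def by (simp add: card_gt_0_iff)
    have cn0: "0 \<le> c * real n" using c by simp
    have cN: "c * real n < 1 * real n" using c npos by (intro mult_strict_right_mono) auto
    have fl: "real (nat \<lfloor>c * real n\<rfloor>) = of_int \<lfloor>c * real n\<rfloor>" using cn0 by simp
    have k: "1 \<le> nat \<lfloor>c * real n\<rfloor> + 1" "nat \<lfloor>c * real n\<rfloor> + 1 \<le> card ?N"
      using cN cn0 unfolding n_def by (auto, linarith)
    have sz: "size (image_mset ?g (mset_set ?N)) = n" unfolding n_def by simp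
    have sat_eq2: "sat L E eta Lab (Count op D phi c) \<omega> t l = (real (card {x\<in>?N. S x}) > c * real n)"
      using sat_eq OpAvg sumg sz npos by (simp add: pos_less_divide_eq mult.commute)
    show ?thesis
    proof (intro conjI impI)
      assume "0 < rho L E eta Lab (Count op D phi c) \<omega> t l"
      hence "nat \<lfloor>c * real n\<rfloor> + 1 \<le> card {x\<in>?N. S x}"
        using count_aux(1)[OF Nfin pos neg k] rho_eq OpAvg n_def by simp
      hence "real (nat \<lfloor>c * real n\<rfloor> + 1) \<le> real (card {x\<in>?N. S x})" by linarith
      moreover have "c * real n < real (nat \<lfloor>c * real n\<rfloor> + 1)" using fl by linarith
      ultimately show "sat L E eta Lab (Count op D phi c) \<omega> t l" using sat_eq2 by simp
    next
      assume "rho L E eta Lab (Count op D phi c) \<omega> t l < 0"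
      hence "card {x\<in>?N. S x} \<le> nat \<lfloor>c * real n\<rfloor>"
        using count_aux(2)[OF Nfin pos neg k] rho_eq OpAvg n_def by simp
      hence "real (card {x\<in>?N. S x}) \<le> real (nat \<lfloor>c * real n\<rfloor>)" by linarith
      moreover have "real (nat \<lfloor>c * real n\<rfloor>) \<le> c * real n" using fl by linarith
      ultimately show "\<not> sat L E eta Lab (Count op D phi c) \<omega> t l" using sat_eq2 by simp
    qed
  qed
qed


theorem theorem1:
  fixes L :: "'l set" and E :: "'l set set" and eta :: "'l set \<Rightarrow> real"
    and Lab :: "'l \<Rightarrow> 'p set"
    and phi :: "('x::finite, 'p) sastl" and \<omega> :: "real \<Rightarrow> 'l \<Rightarrow> 'x \<Rightarrow> real"
    and t :: real and l :: 'l
  assumes "finite L" and "L \<noteq> {}"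
    and "\<forall>e\<in>E. \<exists>a\<in>L. \<exists>b\<in>L. e = {a, b}"
    and "\<forall>e\<in>E. 0 \<le> eta e"
    and "wf L E eta Lab phi"
    and "0 \<le> t" and "l \<in> L"
  shows "(rho L E eta Lab phi \<omega> t l > 0 \<longrightarrow> sat L E eta Lab phi \<omega> t l) \<and>
         (rho L E eta Lab phi \<omega> t l < 0 \<longrightarrow> \<not> sat L E eta Lab phi \<omega> t l)"
  using main[OF assms(1) assms(5) assms(6) assms(7)] .

end
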